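(* Let $q$ be a prime power, $d\ge 1$, let $B$ be a non-degenerate bilinear form on $\mathbb{F}_q^d$, and let $\lambda\in\mathbb{F}_q^{*}$. For every nonempty subset $V\subseteq\mathbb{F}_q^d$, \[ \sum_{\mathbf{v}\in\mathbb{F}_q^d}\Big(|N^{\lambda}_V(\mathbf{v})|-\frac{|V|}{q}\Big)^2 < q^{d-1}|V|. \]
   Context: $B:\mathbb{F}_q^d\times\mathbb{F}_q^d\to\mathbb{F}_q$ is bilinear and non-degenerate. For $\mathbf{v}\in\mathbb{F}_q^d$, $N^{\lambda}(\mathbf{v})=\{\mathbf{u}\in\mathbb{F}_q^d: B(\mathbf{v},\mathbf{u})=\lambda\}$, and for $V\subseteq\mathbb{F}_q^d$, $N^{\lambda}_V(\mathbf{v})=N^{\lambda}(\mathbf{v})\cap V$. $\mathbb{F}_q^*=\mathbb{F}_q\setminus\{0\}$. *)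

theory Defs
  imports "HOL-Analysis.Analysis"
begin

definition bilinear_form :: "('a::field ^ 'n \<Rightarrow> 'a ^ 'n \<Rightarrow> 'a) \<Rightarrow> bool" where
  "bilinear_form B \<longleftrightarrow>
     (\<forall>x y z. B (x + y) z = B x z + B y z) \<and>
     (\<forall>c x z. B (c *s x) z = c * B x z) \<and>
     (\<forall>x y z. B x (y + z) = B x y + B x z) \<and>
     (\<forall>c x z. B x (c *s z) = c * B x z)"

definition nondegenerate :: "('a::field ^ 'n \<Rightarrow> 'a ^ 'n \<Rightarrow> 'a) \<Rightarrow> bool" where
  "nondegenerate B \<longleftrightarrow>
     (\<forall>v. (\<forall>u. B v u = 0) \<longrightarrow> v = 0) \<and>
     (\<forall>u. (\<forall>v. B v u = 0) \<longrightarrow> u = 0)"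

definition Nlam :: "('a ^ 'n \<Rightarrow> 'a ^ 'n \<Rightarrow> 'a) \<Rightarrow> 'a \<Rightarrow> 'a ^ 'n \<Rightarrow> ('a ^ 'n) set" where
  "Nlam B lam v = {u. B v u = lam}"

definition NlamV :: "('a ^ 'n \<Rightarrow> 'a ^ 'n \<Rightarrow> 'a) \<Rightarrow> 'a \<Rightarrow> ('a ^ 'n) set \<Rightarrow> 'a ^ 'n \<Rightarrow> ('a ^ 'n) set" where
  "NlamV B lam V v = Nlam B lam v \<inter> V"

end

theory Submission imports Defs "HOL-Library.Cardinality" begin
lemma card_vec_univ: "CARD('a::finite ^ 'n) = CARD('a) ^ CARD('n)"
proof -
  have "bij_betw vec_nth (UNIV :: ('a^'n) set) (UNIV :: ('n \<Rightarrow> 'a) set)"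
    by (intro bij_betwI[of _ _ _ vec_lambda]) (auto simp: vec_eq_iff)
  then have "CARD('a ^ 'n) = CARD('n \<Rightarrow> 'a)" by (rule bij_betw_same_card)
  then show ?thesis by (simp add: card_fun)
qed

lemma fiber_card:
  fixes g :: "'x \<Rightarrow> 'a::{finite,field}"
  assumes fin: "finite S" and h1: "\<And>c x. x\<in>S \<Longrightarrow> h c x \<in> S \<and> g (h c x) = g x + c"
    and h2: "\<And>c x. x\<in>S \<Longrightarrow> h (-c) (h c x) = x"
  shows "CARD('a) * card {x\<in>S. g x = a} = card S"
proof -
  have le: "card {x\<in>S. g x = a'} \<le> card {x\<in>S. g x = b}" for a' b
  proof (rule card_inj_on_le[where f="h (b - a')"])
    show "inj_on (h (b - a')) {x \<in> S. g x = a'}"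
    proof (rule inj_onI)
      fix x y assume x: "x \<in> {x \<in> S. g x = a'}" and y: "y \<in> {x \<in> S. g x = a'}"
        and e: "h (b - a') x = h (b - a') y"
      have "x = h (- (b - a')) (h (b - a') x)" using x h2[of x "b - a'"] by simp
      also have "\<dots> = h (- (b - a')) (h (b - a') y)" using e by simp
      also have "\<dots> = y" using y h2[of y "b - a'"] by simp
      finally show "x = y" .
    qed
    show "h (b - a') ` {x \<in> S. g x = a'} \<subseteq> {x \<in> S. g x = b}"
    proof
      fix y assume "y \<in> h (b - a') ` {x \<in> S. g x = a'}"
      then obtain x where x: "x \<in> S" "g x = a'" and y: "y = h (b - a') x" by blast
      show "y \<in> {x \<in> S. g x = b}" using h1[OF x(1), of "b - a'"] x y by simp
    qed
    show "finite {x \<in> S. g x = b}" using fin by simp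
  qed
  have eq: "card {x\<in>S. g x = b} = card {x\<in>S. g x = a}" for b
    using le[of a b] le[of b a] by simp
  have "S = (\<Union>b. {x\<in>S. g x = b})" by auto
  then have "card S = card (\<Union>b. {x\<in>S. g x = b})" by simp
  also have "\<dots> = (\<Sum>b\<in>UNIV. card {x\<in>S. g x = b})"
    by (rule card_UN_disjoint) (auto simp: fin)
  also have "\<dots> = (\<Sum>b\<in>(UNIV::'a set). card {x\<in>S. g x = a})" by (rule sum.cong) (rule refl, rule eq)
  also have "\<dots> = CARD('a) * card {x\<in>S. g x = a}" by simp
  finally show ?thesis by simp
qed


lemma card_ind: "finite A \<Longrightarrow> real (card {x\<in>A. P x}) = (\<Sum>x\<in>A. if P x then 1 else 0)"
  using sum.inter_filter[of A "\<lambda>x. 1::real" P] by simp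

lemma test:
  fixes B :: "('a::{finite,field}) ^ 'n \<Rightarrow> 'a ^ 'n \<Rightarrow> 'a"
  assumes bf: "bilinear_form B"
  shows "B (v + c *s v0) u = B v u + c * B v0 u"
    and "B v (w + c *s u) = B v w + c * B v u"
    and "(v + c *s v0) + (-c) *s v0 = v"
  using bf unfolding bilinear_form_def by (auto simp: vec_eq_iff algebra_simps)

lemma fib1:
  fixes B :: "('a::{finite,field}) ^ 'n \<Rightarrow> 'a ^ 'n \<Rightarrow> 'a"
  assumes bf: "bilinear_form B" and nd: "nondegenerate B" and u: "u \<noteq> 0"
  shows "card {v. B v u = a} = CARD('a) ^ (CARD('n) - 1)"
proof -
  obtain v1 where v1: "B v1 u \<noteq> 0" using nd u unfolding nondegenerate_def by blast
  define v0 where "v0 = inverse (B v1 u) *s v1"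
  have v0: "B v0 u = 1" using bf v1 unfolding v0_def bilinear_form_def by simp
  have "CARD('a) * card {x\<in>UNIV. B x u = a} = card (UNIV :: ('a^'n) set)"
    by (rule fiber_card[where h="\<lambda>c v. v + c *s v0"]) (auto simp: test[OF bf] v0)
  also have "\<dots> = CARD('a) * CARD('a) ^ (CARD('n) - 1)"
    by (simp add: card_vec_univ power_Suc[symmetric])
  finally show ?thesis by simp
qed

lemma fib2:
  fixes B :: "('a::{finite,field}) ^ 'n \<Rightarrow> 'a ^ 'n \<Rightarrow> 'a"
  assumes bf: "bilinear_form B" and nd: "nondegenerate B" and u: "u \<noteq> 0"
    and uw: "u \<noteq> w" and lam: "lam \<noteq> 0"
  shows "CARD('a) * card {v. B v u = lam \<and> B v w = lam} \<le> CARD('a) ^ (CARD('n) - 1)"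
proof (cases "\<exists>c. w = c *s u")
  case True
  then obtain c where c: "w = c *s u" by blast
  have E: "{v. B v u = lam \<and> B v w = lam} = {}"
  proof (rule ccontr)
    assume "{v. B v u = lam \<and> B v w = lam} \<noteq> {}"
    then obtain v where "B v u = lam" "B v w = lam" by blast
    then have "c * lam = lam" using bf c unfolding bilinear_form_def by simp
    then have "c = 1" using lam by simp
    then show False using c uw by simp
  qed
  show ?thesis unfolding E by simp
next
  case False
  have Bl: "B v (c *s x) = c * B v x" "B (c *s x) z = c * B x z" for v c x z
    using bf unfolding bilinear_form_def by auto
  obtain v1 where v1: "B v1 u \<noteq> 0" using nd u unfolding nondegenerate_def by blast
  define v0 where "v0 = inverse (B v1 u) *s v1"
  have v0: "B v0 u = 1" using bf v1 unfolding v0_def bilinear_form_def by simp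
  have "\<exists>v2. B v2 u = 0 \<and> B v2 w = 1"
  proof (rule ccontr)
    assume A: "\<not> ?thesis"
    have K: "B v w = 0" if "B v u = 0" for v
    proof (rule ccontr)
      assume "B v w \<noteq> 0"
      then have "B (inverse (B v w) *s v) u = 0 \<and> B (inverse (B v w) *s v) w = 1"
        using that by (simp add: Bl)
      then show False using A by blast
    qed
    define c where "c = B v0 w"
    have "B v (w + (- c) *s u) = 0" for v
    proof -
      have "B (v + (- B v u) *s v0) u = 0" using test(1)[OF bf, of v "- B v u" v0 u] v0 by simp
      then have "B (v + (- B v u) *s v0) w = 0" by (rule K)
      then have "B v w = B v u * c" using test(1)[OF bf, of v "- B v u" v0 w] c_def by (simp add: mult.commute)
      then show ?thesis using test(2)[OF bf, of v w "- c" u] by (simp add: mult.commute)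
    qed
    then have "w + (- c) *s u = 0" using nd unfolding nondegenerate_def by blast
    then have "w = c *s u" by (simp add: vec_eq_iff algebra_simps)
    then show False using False by blast
  qed
  then obtain v2 where v2: "B v2 u = 0" "B v2 w = 1" by blast
  have "CARD('a) * card {x\<in>{v. B v u = lam}. B x w = lam} = card {v. B v u = lam}"
    by (rule fiber_card[where h="\<lambda>c v. v + c *s v2"]) (auto simp: test[OF bf] v2)
  also have "\<dots> = CARD('a) ^ (CARD('n) - 1)" by (rule fib1[OF bf nd u])
  finally show ?thesis by simp
qed

theorem lemma2p1:
  fixes B :: "('a::{finite,field}) ^ 'n \<Rightarrow> 'a ^ 'n \<Rightarrow> 'a"
    and lam :: 'a
    and V :: "('a ^ 'n) set"
  assumes "bilinear_form B"
    and "nondegenerate B"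
    and "lam \<noteq> 0"
    and "V \<noteq> {}"
  shows "(\<Sum>v\<in>(UNIV :: ('a ^ 'n) set).
            (real (card (NlamV B lam V v)) - real (card V) / real CARD('a))\<^sup>2)
         < real CARD('a) ^ (CARD('n) - 1) * real (card V)"
proof -
  note bf = assms(1) and nd = assms(2) and lam = assms(3)
  define q where "q = real CARD('a)"
  define M where "M = real CARD('a) ^ (CARD('n) - 1)"
  define n where "n = real (card V)"
  define V0 where "V0 = {u\<in>V. u \<noteq> 0}"
  define x where "x = real (card V0)"
  define A where "A v = real (card (NlamV B lam V v))" for v
  define P where "P u w = real (card {v. B v u = lam \<and> B v w = lam})" for u w
  have ci: "\<And>P. real (card {v::'a^'n. P v}) = (\<Sum>v\<in>UNIV. if P v then 1 else 0)"
    using card_ind[of "UNIV::('a^'n) set"] by simp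
  have B0: "B v 0 = 0" for v
  proof -
    have "B v (0 *s v) = 0 * B v v" using bf unfolding bilinear_form_def by blast
    then show ?thesis by simp
  qed
  have q2: "q \<ge> 2"
  proof -
    have "card {0::'a, 1} \<le> CARD('a)" by (rule card_mono) auto
    then show ?thesis unfolding q_def by simp
  qed
  have Mpos: "M > 0" unfolding M_def by simp
  have fibr: "real (card {v. B v u = lam}) = M" if "u \<noteq> 0" for u
    using fib1[OF bf nd that] unfolding M_def by simp
  have A_eq: "A v = (\<Sum>u\<in>V. if B v u = lam then 1 else 0)" for v
  proof -
    have "NlamV B lam V v = {u\<in>V. B v u = lam}" by (auto simp: NlamV_def Nlam_def)
    then show ?thesis unfolding A_def by (simp add: card_ind)
  qed
  have S1: "(\<Sum>v\<in>UNIV. A v) = x * M"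
  proof -
    have "(\<Sum>v\<in>UNIV. A v) = (\<Sum>u\<in>V. \<Sum>v\<in>UNIV. if B v u = lam then 1 else 0)"
      unfolding A_eq by (rule sum.swap)
    also have "\<dots> = (\<Sum>u\<in>V. real (card {v. B v u = lam}))"
      by (simp add: ci)
    also have "\<dots> = (\<Sum>u\<in>V. if u \<noteq> 0 then M else 0)"
      by (rule sum.cong) (auto simp: fibr B0 lam[symmetric])
    also have "\<dots> = (\<Sum>u\<in>V0. M)" unfolding V0_def
      using sum.inter_filter[of V "\<lambda>u. M" "\<lambda>u. u \<noteq> 0"] by simp
    finally show ?thesis unfolding x_def by simp
  qed
  have S2: "(\<Sum>v\<in>UNIV. (A v)\<^sup>2) = (\<Sum>u\<in>V. \<Sum>w\<in>V. P u w)"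
  proof -
    have "(\<Sum>v\<in>UNIV. (A v)\<^sup>2) = (\<Sum>v\<in>UNIV. \<Sum>u\<in>V. \<Sum>w\<in>V.
              (if B v u = lam \<and> B v w = lam then 1 else 0))"
      unfolding A_eq power2_eq_square sum_product by (intro sum.cong) auto
    also have "\<dots> = (\<Sum>u\<in>V. \<Sum>v\<in>UNIV. \<Sum>w\<in>V.
              (if B v u = lam \<and> B v w = lam then 1 else 0))" by (rule sum.swap)
    also have "\<dots> = (\<Sum>u\<in>V. \<Sum>w\<in>V. \<Sum>v\<in>UNIV.
              (if B v u = lam \<and> B v w = lam then 1 else 0))"
      by (intro sum.cong refl sum.swap)
    also have "\<dots> = (\<Sum>u\<in>V. \<Sum>w\<in>V. P u w)"
      unfolding P_def by (simp add: ci)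
    finally show ?thesis .
  qed
  have Pb: "q * P u w \<le> (if u \<in> V0 \<and> w \<in> V0 then (if u = w then q * M else M) else 0)"
    if "u \<in> V" "w \<in> V" for u w
  proof (cases "u = 0 \<or> w = 0")
    case True
    then have E: "{v. B v u = lam \<and> B v w = lam} = {}" using B0 lam by auto
    show ?thesis unfolding P_def E using True V0_def by auto
  next
    case False
    show ?thesis
    proof (cases "u = w")
      case True
      then show ?thesis using False that fibr unfolding P_def V0_def by simp
    next
      case uw: False
      have "real (CARD('a) * card {v. B v u = lam \<and> B v w = lam}) \<le> real (CARD('a) ^ (CARD('n) - 1))"
        using fib2[OF bf nd _ uw lam] False by linarith
      then show ?thesis using False that uw unfolding P_def V0_def q_def M_def by simp
    qed
  qed
  have inner: "(\<Sum>w\<in>V0. if u = w then q * M else M) = q * M + (x - 1) * M" if "u \<in> V0" for u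
  proof -
    have "(\<Sum>w\<in>V0. if u = w then q * M else M) = (if u = u then q * M else M) + (\<Sum>w\<in>V0 - {u}. if u = w then q * M else M)"
      using that by (simp add: sum.remove)
    also have "\<dots> = q * M + (\<Sum>w\<in>V0 - {u}. M)" by (intro arg_cong2[where f="(+)"] sum.cong) auto
    also have "\<dots> = q * M + (x - 1) * M" using that unfolding x_def
      by (simp add: card_Diff_singleton)
        (metis One_nat_def Suc_leI card_gt_0_iff empty_iff finite of_nat_diff of_nat_1)
    finally show ?thesis .
  qed
  have R: "(\<Sum>x\<in>V. if x \<in> V0 then g x else 0) = sum g V0" for g :: "'a^'n \<Rightarrow> real"
  proof -
    have "V \<inter> V0 = V0" unfolding V0_def by auto
    then show ?thesis using sum.inter_restrict[of V g V0] by simp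
  qed
  have S2b: "q * (\<Sum>v\<in>UNIV. (A v)\<^sup>2) \<le> x * (q * M + (x - 1) * M)"
  proof -
    have "q * (\<Sum>v\<in>UNIV. (A v)\<^sup>2) = (\<Sum>u\<in>V. \<Sum>w\<in>V. q * P u w)"
      unfolding S2 by (simp add: sum_distrib_left)
    also have "\<dots> \<le> (\<Sum>u\<in>V. \<Sum>w\<in>V. (if u \<in> V0 \<and> w \<in> V0 then (if u = w then q * M else M) else 0))"
      by (intro sum_mono Pb)
    also have "\<dots> = (\<Sum>u\<in>V. if u \<in> V0 then (\<Sum>w\<in>V. if w \<in> V0 then (if u = w then q * M else M) else 0) else 0)"
      by (rule sum.cong) auto
    also have "\<dots> = (\<Sum>u\<in>V. if u \<in> V0 then (\<Sum>w\<in>V0. (if u = w then q * M else M)) else 0)"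
      by (simp only: R)
    also have "\<dots> = (\<Sum>u\<in>V0. \<Sum>w\<in>V0. (if u = w then q * M else M))"
      by (simp only: R)
    also have "\<dots> = (\<Sum>u\<in>V0. q * M + (x - 1) * M)" by (rule sum.cong) (auto simp: inner)
    also have "\<dots> = x * (q * M + (x - 1) * M)" unfolding x_def by simp
    finally show ?thesis .
  qed
  have n1: "n \<ge> 1" using assms(4) unfolding n_def
    by (simp add: Suc_leI card_gt_0_iff)
  have xn: "x = n \<or> x = n - 1"
  proof (cases "0 \<in> V")
    case True
    then have "V0 = V - {0}" unfolding V0_def by auto
    then show ?thesis using True n1 unfolding x_def n_def by (simp add: card_Diff_singleton of_nat_diff)
  next
    case False
    then have "V0 = V" unfolding V0_def by auto
    then show ?thesis unfolding x_def n_def by simp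
  qed
  have key: "q * x + x * (x - 1) - 2 * n * x + n\<^sup>2 < q * n"
    using xn
  proof
    assume "x = n" then show ?thesis using n1 by (simp add: algebra_simps power2_eq_square)
  next
    assume "x = n - 1"
    then have nx: "n = x + 1" by simp
    have "x \<ge> 0" unfolding x_def by simp
    then show ?thesis using q2 unfolding nx by (simp add: algebra_simps power2_eq_square)
  qed
  have keyM: "M * (q * x + x * (x - 1) - 2 * n * x + n\<^sup>2) < M * (q * n)"
    using key Mpos by simp
  have cardU: "real CARD('a ^ 'n) = q * M"
  proof -
    have "CARD('a ^ 'n) = CARD('a) * CARD('a) ^ (CARD('n) - 1)"
      by (simp add: card_vec_univ power_Suc[symmetric])
    then show ?thesis unfolding q_def M_def by simp
  qed
  have expand: "(\<Sum>v\<in>UNIV. (A v - n / q)\<^sup>2) = (\<Sum>v\<in>UNIV. (A v)\<^sup>2) - 2 * (n / q) * (\<Sum>v\<in>UNIV. A v) + real CARD('a ^ 'n) * (n / q)\<^sup>2"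
    by (simp add: power2_diff sum.distrib sum_subtractf sum_distrib_left sum_distrib_right sum_divide_distrib mult_ac)
  have qpos: "q > 0" using q2 by simp
  have "q * (\<Sum>v\<in>UNIV. (A v - n / q)\<^sup>2) = q * (\<Sum>v\<in>UNIV. (A v)\<^sup>2) - 2 * n * x * M + M * n\<^sup>2"
    unfolding expand S1 cardU using qpos by (simp add: field_simps power2_eq_square)
  also have "\<dots> \<le> x * (q * M + (x - 1) * M) - 2 * n * x * M + M * n\<^sup>2" using S2b by simp
  also have "\<dots> = M * (q * x + x * (x - 1) - 2 * n * x + n\<^sup>2)" by (simp add: algebra_simps)
  also have "\<dots> < M * (q * n)" by (rule keyM)
  finally have "q * (\<Sum>v\<in>UNIV. (A v - n / q)\<^sup>2) < q * (M * n)" by (simp add: algebra_simps)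
  then have "(\<Sum>v\<in>UNIV. (A v - n / q)\<^sup>2) < M * n" using qpos by simp
  then show ?thesis unfolding A_def n_def q_def M_def .
qed
end
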